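(* Let $p$ be a prime, let $e\geq2$ and $d\geq2$ be integers, let $\lambda\in\{1,\dots,\min(e,d-1)\}$, and let $\alpha=(\alpha_1,\dots,\alpha_d)\in\mathcal R_\lambda(d,e)$ with $\mu=\mu(\alpha)$. Then $$\sum_{i=1}^d p^{\alpha_i}x_i\geq \lambda p^{\mu+1}+(d-\lambda)p^\mu$$ for every $(x_1,\dots,x_d)\in\mathcal P(p^e,d)$, where $\mathcal P(p^e,d)\subset\mathbb R^d$ is the convex hull of all $d$-dimensional vector-factorisations of $p^e$.
   Context: $\mathbb N=\{0,1,2,\dots\}$. A $d$-dimensional vector-factorisation of $N\geq1$ is a vector $(v_1,\dots,v_d)\in\mathbb N^d$ with $v_1\cdots v_d=N$. $\mathcal R_\lambda(d,e)$ is the set of all $\alpha\in\mathbb N^d$ with $\min(\alpha_1,\dots,\alpha_d)=0$, $\max(\alpha_1,\dots,\alpha_d)\,d<e+\sum_i\alpha_i$ and $e+\sum_i\alpha_i\equiv\lambda\pmod d$. For such $\alpha$, $\mu(\alpha)$ is the integer with $\mu(\alpha)d+\lambda=e+\sum_{i=1}^d\alpha_i$. *)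

theory Defs
  imports "HOL-Analysis.Analysis"
begin

text \<open>Dimension d = CARD('n); vectors in R^d are real^'n, index vectors are 'n => nat.\<close>

definition vec_factorisations :: "nat \<Rightarrow> (real^'n) set" where
  "vec_factorisations N = {(\<chi> i. real (v i)) | v :: 'n \<Rightarrow> nat. (\<Prod>i\<in>UNIV. v i) = N}"

definition R_set :: "nat \<Rightarrow> nat \<Rightarrow> ('n::finite \<Rightarrow> nat) set" where
  "R_set lam e = {\<alpha>. (\<exists>i. \<alpha> i = 0)
      \<and> Max (range \<alpha>) * CARD('n) < e + (\<Sum>i\<in>UNIV. \<alpha> i)
      \<and> (e + (\<Sum>i\<in>UNIV. \<alpha> i)) mod CARD('n) = lam mod CARD('n)}"

definition mu :: "nat \<Rightarrow> nat \<Rightarrow> ('n::finite \<Rightarrow> nat) \<Rightarrow> int" where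
  "mu lam e \<alpha> = (int e + (\<Sum>i\<in>UNIV. int (\<alpha> i)) - int lam) div int CARD('n)"

end

theory Submission
  imports Defs "HOL-Computational_Algebra.Primes"
begin

lemma tangent_pow:
  fixes p :: real and k m :: nat
  assumes p: "p \<ge> 2"
  shows "p ^ k \<ge> p ^ m + (real k - real m) * (p ^ (m+1) - p ^ m)"
proof (cases "m \<le> k")
  case True
  then obtain j where k: "k = m + j" using le_Suc_ex by blast
  have b: "1 + real j * (p - 1) \<le> p ^ j"
    using Bernoulli_inequality[of "p - 1" j] p by simp
  have pm: "p ^ m \<ge> 0" using p by simp
  have "p ^ m + (real k - real m) * (p ^ (m+1) - p ^ m) = p ^ m * (1 + real j * (p - 1))"
    by (simp add: k algebra_simps)
  also have "\<dots> \<le> p ^ m * p ^ j" using b pm by (rule mult_left_mono)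
  also have "\<dots> = p ^ k" by (simp add: k power_add)
  finally show ?thesis .
next
  case False
  define j where "j = m - k"
  have m: "m = k + j" and j: "j \<ge> 1" using False unfolding j_def by simp_all
  have pk: "p ^ k > 0" "p ^ j > 0" using p by simp_all
  have "real j * (p - 1) \<ge> 1 * 1" using j p by (intro mult_mono) auto
  hence neg: "1 - real j * (p - 1) \<le> 0" by simp
  have "p ^ m + (real k - real m) * (p ^ (m+1) - p ^ m) = (p ^ k * p ^ j) * (1 - real j * (p - 1))"
    by (simp add: m power_add algebra_simps)
  also have "\<dots> \<le> 0" using neg pk by (simp add: mult_nonneg_nonpos)
  also have "\<dots> \<le> p ^ k" using pk by simp
  finally show ?thesis .
qed

lemma balanced_sum:
  fixes p :: real and \<gamma> :: "'n::finite \<Rightarrow> nat"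
  assumes p: "p \<ge> 2" and s: "(\<Sum>i\<in>UNIV. \<gamma> i) = m * CARD('n) + lam"
  shows "(\<Sum>i\<in>UNIV. p ^ \<gamma> i) \<ge> real lam * p ^ (m+1) + (real CARD('n) - real lam) * p ^ m"
proof -
  have "(\<Sum>i\<in>UNIV. p ^ \<gamma> i) \<ge> (\<Sum>i\<in>UNIV. p ^ m + (real (\<gamma> i) - real m) * (p ^ (m+1) - p ^ m))"
    by (intro sum_mono tangent_pow p)
  also have "(\<Sum>i\<in>UNIV. p ^ m + (real (\<gamma> i) - real m) * (p ^ (m+1) - p ^ m))
      = real CARD('n) * p ^ m + (real (\<Sum>i\<in>UNIV. \<gamma> i) - real CARD('n) * real m) * (p ^ (m+1) - p ^ m)"
    by (simp add: sum.distrib sum_subtractf sum_distrib_right[symmetric] left_diff_distrib)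
  also have "\<dots> = real lam * p ^ (m+1) + (real CARD('n) - real lam) * p ^ m"
    by (simp add: s algebra_simps)
  finally show ?thesis .
qed

theorem proposition3p1:
  fixes p e lam :: nat and \<alpha> :: "'n::finite \<Rightarrow> nat" and x :: "real^'n"
  assumes "prime p" and "e \<ge> 2" and "CARD('n) \<ge> 2"
    and "1 \<le> lam" and "lam \<le> min e (CARD('n) - 1)"
    and "\<alpha> \<in> R_set lam e"
    and "x \<in> convex hull (vec_factorisations (p ^ e))"
  shows "(\<Sum>i\<in>UNIV. real p ^ \<alpha> i * x $ i)
    \<ge> real lam * real p ^ nat (mu lam e \<alpha> + 1)
       + real (CARD('n) - lam) * real p ^ nat (mu lam e \<alpha>)"
proof -
  define d where "d = CARD('n)"
  define S where "S = e + (\<Sum>i\<in>UNIV. \<alpha> i)"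
  define m where "m = S div d"
  have lamd: "lam < d" using assms(3,5) unfolding d_def by linarith
  have "S mod d = lam mod d" using assms(6) unfolding R_set_def S_def d_def by simp
  hence Smod: "S mod d = lam" using lamd by simp
  have Sdec: "S = m * d + lam" unfolding m_def using Smod by (metis div_mult_mod_eq)
  have "mu lam e \<alpha> = (int S - int lam) div int d"
    unfolding mu_def S_def d_def by (simp add: of_nat_sum)
  also have "\<dots> = int (m * d) div int d" using Sdec by simp
  also have "\<dots> = int m" using assms(3) unfolding d_def by simp
  finally have mu_eq: "mu lam e \<alpha> = int m" .
  have p2: "real p \<ge> 2" using prime_ge_2_nat[OF assms(1)] by simp
  define c :: "real^'n" where "c = (\<chi> i. real p ^ \<alpha> i)"
  define b where "b = real lam * real p ^ (m+1) + (real d - real lam) * real p ^ m"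
  have key: "vec_factorisations (p ^ e) \<subseteq> {y. inner c y \<ge> b}"
  proof
    fix y :: "real^'n" assume "y \<in> vec_factorisations (p ^ e)"
    then obtain v :: "'n \<Rightarrow> nat" where y: "y = (\<chi> i. real (v i))" and pv: "(\<Prod>i\<in>UNIV. v i) = p ^ e"
      unfolding vec_factorisations_def by blast
    have "\<forall>i. \<exists>j. v i = p ^ j"
    proof
      fix i
      have "v i dvd p ^ e" using pv by (metis dvd_prodI finite UNIV_I)
      thus "\<exists>j. v i = p ^ j" using divides_primepow_nat[OF assms(1)] by blast
    qed
    then obtain \<beta> where \<beta>: "\<And>i. v i = p ^ \<beta> i" by metis
    have "p ^ (\<Sum>i\<in>UNIV. \<beta> i) = p ^ e" using pv by (simp add: \<beta> power_sum)
    hence sb: "(\<Sum>i\<in>UNIV. \<beta> i) = e"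
      using prime_gt_1_nat[OF assms(1)] power_inject_exp by blast
    have sg: "(\<Sum>i\<in>UNIV. \<alpha> i + \<beta> i) = m * CARD('n) + lam"
      using Sdec sb unfolding S_def d_def by (simp add: sum.distrib)
    have "inner c y = (\<Sum>i\<in>UNIV. real p ^ (\<alpha> i + \<beta> i))"
      by (simp add: c_def y inner_vec_def \<beta> power_add)
    moreover have "(\<Sum>i\<in>UNIV. real p ^ (\<alpha> i + \<beta> i)) \<ge> b"
      unfolding b_def d_def by (rule balanced_sum[OF p2 sg])
    ultimately show "y \<in> {y. inner c y \<ge> b}" by simp
  qed
  have "convex hull (vec_factorisations (p ^ e)) \<subseteq> {y. inner c y \<ge> b}"
    using key convex_halfspace_ge[of b c] by (rule hull_minimal)
  with assms(7) have ge: "inner c x \<ge> b" by blast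
  have e1: "inner c x = (\<Sum>i\<in>UNIV. real p ^ \<alpha> i * x $ i)"
    by (simp add: c_def inner_vec_def)
  have e2: "real (CARD('n) - lam) = real d - real lam"
    using lamd unfolding d_def by (rule of_nat_diff[OF less_imp_le])
  have e3: "nat (mu lam e \<alpha> + 1) = m + 1" "nat (mu lam e \<alpha>) = m"
    using mu_eq by simp_all
  show ?thesis using ge unfolding b_def e1 e2 e3 .
qed

end
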